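(* Let $p$ be a prime, $V$ a $4$-dimensional vector space over $\mathbb{F}_p$, $G=GL(V)$, and for $r=1,2,3$ let $\mathcal{L}_r$ be the set of $r$-dimensional subspaces of $V$. Let $\eta:\mathbb{Z}\mathcal{L}_2\to\mathbb{Z}\mathcal{L}_2$ be the $\mathbb{Z}$-linear map with $\eta(x)=\sum_{y\in\mathcal{L}_2,\ y\cap x=\{0\}} y$ for $x\in\mathcal{L}_2$; let $\phi:\mathbb{Z}\mathcal{L}_1\to\mathbb{Z}\mathcal{L}_2$ be given by $\phi(x)=\sum_{y\in\mathcal{L}_2,\ x\cap y=\{0\}}y$ for $x\in\mathcal{L}_1$; and let $\psi:\mathbb{Z}\mathcal{L}_3\to\mathbb{Z}\mathcal{L}_2$ be given by $\psi(x)=\sum_{y\in\mathcal{L}_2,\ x\cap y\neq y}y$ for $x\in\mathcal{L}_3$. Denote by $\overline{\eta},\overline{\phi},\overline{\psi}$ the induced maps on the corresponding $\mathbb{F}_p$-permutation modules $\mathbb{F}_p\mathcal{L}_r$. For $i\ge 0$ let $M_i=\{m\in\mathbb{Z}\mathcal{L}_2 : \eta(m)\in p^i\mathbb{Z}\mathcal{L}_2\}$ and let $\overline{M_i}=(M_i+p\mathbb{Z}\mathcal{L}_2)/p\mathbb{Z}\mathcal{L}_2\subseteq\mathbb{F}_p\mathcal{L}_2$. Let $\mathbf{1}=\sum_{x\in\mathcal{L}_2}x\in\mathbb{F}_p\mathcal{L}_2$. Then: (1) $\ker\overline{\eta}\subseteq\overline{M_1}$; (2) $\mathbb{F}_p\mathbf{1}\oplus(\operatorname{im}\overline{\phi}+\operatorname{im}\overline{\psi})\subseteq\overline{M_2}$;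 (3) $\mathbb{F}_p\mathbf{1}\oplus\operatorname{im}\overline{\eta}\subseteq\overline{M_3}$; (4) $\mathbb{F}_p\mathbf{1}\subseteq\overline{M_4}$.
   Context: $\mathbb{Z}\mathcal{L}_r$ and $\mathbb{F}_p\mathcal{L}_r$ denote the free $\mathbb{Z}$-module and the $\mathbb{F}_p$-vector space with basis $\mathcal{L}_r$; reduction mod $p$ gives $\mathbb{F}_p\mathcal{L}_r=\mathbb{Z}\mathcal{L}_r/p\mathbb{Z}\mathcal{L}_r$. The direct sums are inside $\mathbb{F}_p\mathcal{L}_2=\mathbb{F}_p\mathbf{1}\oplus Y_2$, where $Y_2$ is the subspace of vectors whose coefficients sum to $0$ (the images of $\overline{\eta},\overline{\phi},\overline{\psi}$ lie in $Y_2$). *)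

theory Defs
  imports "HOL-Analysis.Analysis"
begin

text \<open>V = F_p^4 is modelled as the type 'k^4 for a field 'k with CARD('k) = p prime
 (any field with p elements is F_p, and any 4-dimensional F_p-space is isomorphic to F_p^4).\<close>

definition Lr :: "nat \<Rightarrow> ('k::field^4) set set" where
  "Lr r = {W. vec.subspace W \<and> vec.dim W = r}"

text \<open>Elements of R L_r (R = int or the field 'k): coefficient functions supported on L_r.\<close>
definition RL :: "nat \<Rightarrow> (('k::field^4) set \<Rightarrow> 'r::comm_ring_1) set" where
  "RL r = {m. \<forall>x. x \<notin> Lr r \<longrightarrow> m x = 0}"

definition eta :: "(('k::field^4) set \<Rightarrow> 'r::comm_ring_1) \<Rightarrow> ('k^4) set \<Rightarrow> 'r" where
  "eta m y = (if y \<in> Lr 2 then (\<Sum>x\<in>{x\<in>Lr 2. x \<inter> y = {0}}. m x) else 0)"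

definition phi :: "(('k::field^4) set \<Rightarrow> 'r::comm_ring_1) \<Rightarrow> ('k^4) set \<Rightarrow> 'r" where
  "phi m y = (if y \<in> Lr 2 then (\<Sum>x\<in>{x\<in>Lr 1. x \<inter> y = {0}}. m x) else 0)"

definition psi :: "(('k::field^4) set \<Rightarrow> 'r::comm_ring_1) \<Rightarrow> ('k^4) set \<Rightarrow> 'r" where
  "psi m y = (if y \<in> Lr 2 then (\<Sum>x\<in>{x\<in>Lr 3. x \<inter> y \<noteq> y}. m x) else 0)"

definition M :: "nat \<Rightarrow> nat \<Rightarrow> (('k::field^4) set \<Rightarrow> int) set" where
  "M p i = {m \<in> RL 2. \<forall>y. (int p) ^ i dvd eta m y}"

definition redp :: "(('k::field^4) set \<Rightarrow> int) \<Rightarrow> ('k^4) set \<Rightarrow> 'k" where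
  "redp m = (\<lambda>x. of_int (m x))"

definition Mbar :: "nat \<Rightarrow> nat \<Rightarrow> (('k::field^4) set \<Rightarrow> 'k) set" where
  "Mbar p i = redp ` M p i"

definition one :: "('k::field^4) set \<Rightarrow> 'k" where
  "one x = (if x \<in> Lr 2 then 1 else 0)"

definition line_one :: "(('k::field^4) set \<Rightarrow> 'k) set" where
  "line_one = {(\<lambda>x. c * one x) | c. True}"

definition setsum :: "(('k::field^4) set \<Rightarrow> 'k) set \<Rightarrow> (('k^4) set \<Rightarrow> 'k) set \<Rightarrow> (('k^4) set \<Rightarrow> 'k) set" where
  "setsum A B = {(\<lambda>x. a x + b x) | a b. a \<in> A \<and> b \<in> B}"

definition ker_etabar :: "(('k::field^4) set \<Rightarrow> 'k) set" where
  "ker_etabar = {v \<in> RL 2. \<forall>y. eta v y = 0}"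

definition im_etabar :: "(('k::field^4) set \<Rightarrow> 'k) set" where
  "im_etabar = eta ` RL 2"

definition im_phibar :: "(('k::field^4) set \<Rightarrow> 'k) set" where
  "im_phibar = phi ` RL 1"

definition im_psibar :: "(('k::field^4) set \<Rightarrow> 'k) set" where
  "im_psibar = psi ` RL 3"

end

theory Submission imports Defs begin

context
  assumes finK: "finite (UNIV :: 'k::field set)"
begin

lemma card_span_indep:
  fixes B :: "('k^4) set"
  assumes "vec.independent B"
  shows "card (vec.span B) = CARD('k) ^ card B"
proof -
  have fB: "finite B" using assms vec.finiteI_independent by blast
  have "vec.independent B \<longrightarrow> card (vec.span B) = CARD('k) ^ card B"
    using fB
  proof (induction B rule: finite_induct)
    case empty then show ?case by simp
  next
    case (insert a B)
    show ?case
    proof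
      assume ind: "vec.independent (insert a B)"
      then have iB: "vec.independent B" and aB: "a \<notin> vec.span B"
        using ind insert.hyps vec.independent_insert[of a B] by auto
      have eq: "vec.span (insert a B) = (\<lambda>(c,s). c *s a + s) ` (UNIV \<times> vec.span B)"
      proof (rule set_eqI)
        fix x
        show "x \<in> vec.span (insert a B) \<longleftrightarrow> x \<in> (\<lambda>(c,s). c *s a + s) ` (UNIV \<times> vec.span B)"
          unfolding vec.span_breakdown_eq
        proof
          assume "\<exists>k. x - k *s a \<in> vec.span B"
          then obtain k where "x - k *s a \<in> vec.span B" by blast
          then show "x \<in> (\<lambda>(c,s). c *s a + s) ` (UNIV \<times> vec.span B)"
            by (intro image_eqI[of _ _ "(k, x - k *s a)"]) auto
        next
          assume "x \<in> (\<lambda>(c,s). c *s a + s) ` (UNIV \<times> vec.span B)"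
          then obtain c s where "s \<in> vec.span B" "x = c *s a + s" by auto
          then show "\<exists>k. x - k *s a \<in> vec.span B"
            by (intro exI[of _ c]) simp
        qed
      qed
      have inj: "inj_on (\<lambda>(c,s). c *s a + s) (UNIV \<times> vec.span B)"
      proof (rule inj_onI, clarsimp)
        fix c s c' s'
        assume s: "s \<in> vec.span B" and s': "s' \<in> vec.span B" and e: "c *s a + s = c' *s a + s'"
        have "(c - c') *s a = s' - s" using e
          by (simp add: vec.scale_left_diff_distrib algebra_simps)
        moreover have "s' - s \<in> vec.span B" using s s' vec.span_diff by blast
        ultimately have cc: "c = c'"
          using aB vec.span_scale[of "s' - s" B "inverse (c - c')"] by (metis vec.scale_scale vec.scale_one left_inverse right_minus_eq)
        then show "c = c' \<and> s = s'" using e by simp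
      qed
      have "card (vec.span (insert a B)) = card ((UNIV::'k set) \<times> vec.span B)"
        unfolding eq using card_image[OF inj] by simp
      also have "\<dots> = CARD('k) * CARD('k) ^ card B"
        using insert.IH iB by (simp add: card_cartesian_product)
      finally show "card (vec.span (insert a B)) = CARD('k) ^ card (insert a B)"
        using insert.hyps by simp
    qed
  qed
  then show ?thesis using assms by blast
qed

lemma card_subspace:
  fixes W :: "('k^4) set"
  assumes "vec.subspace W"
  shows "card W = CARD('k) ^ vec.dim W"
proof -
  obtain B where B: "B \<subseteq> W" "vec.independent B" "W \<subseteq> vec.span B" "card B = vec.dim W"
    using vec.basis_exists by blast
  have "vec.span B = W" using B assms vec.span_minimal by blast
  then show ?thesis using card_span_indep[OF B(2)] B(4) by simp
qed

lemma dimV: "vec.dim (UNIV :: ('k^4) set) = 4"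
  by (simp add: card_cart_basis)

lemma cardV: "card (UNIV :: ('k^4) set) = CARD('k) ^ 4"
  using card_subspace[of UNIV] dimV by simp

lemma finV: "finite (UNIV :: ('k^4) set)"
proof -
  have "CARD('k) > 0" using finK by (simp add: card_gt_0_iff)
  then show ?thesis using cardV card.infinite by fastforce
qed

lemma finW: "finite (W :: ('k^4) set)"
  by (rule finite_subset[OF subset_UNIV finV])

lemma finP: "finite (X :: (('k^4) \<times> ('k^4)) set)"
  by (rule finite_subset[OF subset_UNIV]) (metis finite_cartesian_product finV UNIV_Times_UNIV)

lemma finL: "finite (Lr r :: ('k^4) set set)"
proof -
  have "Lr r \<subseteq> Pow (UNIV :: ('k^4) set)" by auto
  moreover have "finite (Pow (UNIV :: ('k^4) set))" using finite_Pow_iff[THEN iffD2, OF finV] .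
  ultimately show ?thesis by (rule finite_subset)
qed

lemma q2: "CARD('k) \<ge> 2"
proof -
  have "(0::'k) \<noteq> 1" by simp
  then have "card {0::'k, 1} = 2" by simp
  moreover have "card {0::'k, 1} \<le> CARD('k)" using finK by (intro card_mono) auto
  ultimately show ?thesis by simp
qed

lemma int_card_subspace:
  fixes W :: "('k^4) set"
  assumes "vec.subspace W"
  shows "int (card W) = int CARD('k) ^ vec.dim W"
  using card_subspace[OF assms] by simp

lemma dim_le4: "vec.dim (W :: ('k^4) set) \<le> 4"
  using vec.dim_subset[of W UNIV] dimV by simp

lemma int_card_compl:
  fixes W :: "('k^4) set"
  assumes "vec.subspace W"
  shows "int (card (UNIV - W)) = int CARD('k) ^ 4 - int CARD('k) ^ vec.dim W"
proof -
  have "card (UNIV - W) = card (UNIV::('k^4) set) - card W"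
    using finV by (simp add: card_Diff_subset finW)
  moreover have "card W \<le> card (UNIV::('k^4) set)" using finV card_mono by blast
  ultimately show ?thesis using cardV int_card_subspace[OF assms] by (simp add: of_nat_diff)
qed

lemma int_card_diff:
  fixes W Z :: "('k^4) set"
  assumes "vec.subspace W" "vec.subspace Z" "W \<subseteq> Z"
  shows "int (card (Z - W)) = int CARD('k) ^ vec.dim Z - int CARD('k) ^ vec.dim W"
proof -
  have "card (Z - W) = card Z - card W"
    using assms by (simp add: card_Diff_subset finW)
  moreover have "card W \<le> card Z" using assms finW card_mono by blast
  ultimately show ?thesis using int_card_subspace assms by (simp add: of_nat_diff)
qed

lemma span2: "vec.span {u, v} = {a *s u + b *s v | a b. True}"
proof (rule set_eqI)
  fix w
  show "w \<in> vec.span {u, v} \<longleftrightarrow> w \<in> {a *s u + b *s v | a b. True}"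
    unfolding vec.span_breakdown_eq vec.span_singleton
  proof
    assume "\<exists>k. w - k *s u \<in> range (\<lambda>k. k *s v)"
    then obtain a b where "w - a *s u = b *s v" by auto
    then have "w = a *s u + b *s v" by (simp add: algebra_simps)
    then show "w \<in> {a *s u + b *s v | a b. True}" by blast
  next
    assume "w \<in> {a *s u + b *s v | a b. True}"
    then obtain a b where "w = a *s u + b *s v" by blast
    then show "\<exists>k. w - k *s u \<in> range (\<lambda>k. k *s v)" by (intro exI[of _ a]) auto
  qed
qed

definition IP :: "(('k^4) \<times> ('k^4)) set" where
  "IP = {(u,v). u \<noteq> 0 \<and> v \<notin> vec.span {u}}"

lemma dim_pair:
  assumes "u \<noteq> 0" "v \<notin> vec.span {u::'k^4}"
  shows "vec.dim {u, v} = 2"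
proof -
  have "{u,v} = insert v {u}" by auto
  then show ?thesis using assms by (simp add: vec.dim_insert)
qed

lemma sp_L2:
  assumes "(u,v) \<in> IP"
  shows "vec.span {u, v} \<in> Lr 2"
  using assms dim_pair by (simp add: IP_def Lr_def)

lemma sp_eq:
  assumes "y \<in> Lr 2" "u \<in> y" "v \<in> y" "(u,v) \<in> IP"
  shows "vec.span {u, v} = y"
proof (rule vec.subspace_dim_equal)
  show "vec.subspace (vec.span {u, v})" by simp
  show "vec.subspace y" using assms by (simp add: Lr_def)
  show "vec.span {u, v} \<subseteq> y" using assms by (intro vec.span_minimal) (auto simp: Lr_def)
  show "vec.dim y \<le> vec.dim (vec.span {u, v})" using assms dim_pair by (simp add: Lr_def IP_def)
qed

lemma line_dim: "u \<noteq> 0 \<Longrightarrow> vec.dim (vec.span {u::'k^4}) = 1"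
  by simp

lemma fiber:
  assumes y: "y \<in> Lr 2"
  shows "{(u,v) \<in> IP. u \<in> S \<and> vec.span {u,v} = y} = Sigma (y \<inter> S - {0}) (\<lambda>u. y - vec.span {u})"
proof -
  have sy: "vec.subspace y" using y by (simp add: Lr_def)
  show ?thesis
  proof (rule set_eqI, clarify)
    fix u v
    show "((u,v) \<in> {(u,v) \<in> IP. u \<in> S \<and> vec.span {u,v} = y}) = ((u,v) \<in> Sigma (y \<inter> S - {0}) (\<lambda>u. y - vec.span {u}))"
    proof
      assume "(u,v) \<in> {(u,v) \<in> IP. u \<in> S \<and> vec.span {u,v} = y}"
      then show "(u,v) \<in> Sigma (y \<inter> S - {0}) (\<lambda>u. y - vec.span {u})"
        by (auto simp: IP_def vec.span_base)
    next
      assume a: "(u,v) \<in> Sigma (y \<inter> S - {0}) (\<lambda>u. y - vec.span {u})"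
      then have "(u,v) \<in> IP" by (auto simp: IP_def)
      with a sp_eq[OF y] show "(u,v) \<in> {(u,v) \<in> IP. u \<in> S \<and> vec.span {u,v} = y}" by auto
    qed
  qed
qed

lemma card_fiber:
  assumes y: "y \<in> Lr 2"
  shows "int (card {(u,v) \<in> IP. u \<in> S \<and> vec.span {u,v} = y})
       = int (card (y \<inter> S - {0})) * (int CARD('k) ^ 2 - int CARD('k))"
proof -
  have sy: "vec.subspace y" and dy: "vec.dim y = 2" using y by (auto simp: Lr_def)
  have "int (card (y - vec.span {u})) = int CARD('k) ^ 2 - int CARD('k)" if "u \<in> y" "u \<noteq> 0" for u
    using that int_card_diff[of "vec.span {u}" y] sy dy vec.span_minimal[of "{u}" y] by simp
  then show ?thesis
    unfolding fiber[OF y] by (simp add: finW)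
qed

lemma double_count:
  "int (card {(u,v) \<in> IP. u \<in> S \<and> P (vec.span {u,v})})
   = (\<Sum>y\<in>{y \<in> Lr 2. P y}. int (card (y \<inter> S - {0}))) * (int CARD('k) ^ 2 - int CARD('k))"
proof -
  have eq: "{(u,v) \<in> IP. u \<in> S \<and> P (vec.span {u,v})}
        = (\<Union>y\<in>{y \<in> Lr 2. P y}. {(u,v) \<in> IP. u \<in> S \<and> vec.span {u,v} = y})"
    using sp_L2 by auto
  have "card {(u,v) \<in> IP. u \<in> S \<and> P (vec.span {u,v})}
       = (\<Sum>y\<in>{y \<in> Lr 2. P y}. card {(u,v) \<in> IP. u \<in> S \<and> vec.span {u,v} = y})"
    unfolding eq
    by (rule card_UN_disjoint) (auto simp: finL finW finP)
  then have "int (card {(u,v) \<in> IP. u \<in> S \<and> P (vec.span {u,v})})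
       = (\<Sum>y\<in>{y \<in> Lr 2. P y}. int (card {(u,v) \<in> IP. u \<in> S \<and> vec.span {u,v} = y}))"
    by simp
  also have "\<dots> = (\<Sum>y\<in>{y \<in> Lr 2. P y}. int (card (y \<inter> S - {0})) * (int CARD('k) ^ 2 - int CARD('k)))"
    by (rule sum.cong) (auto simp: card_fiber)
  finally show ?thesis by (simp add: sum_distrib_right)
qed


lemma span_eq_sub: "vec.subspace W \<Longrightarrow> vec.span W = W"
  by simp

lemma dim_ins:
  assumes "vec.subspace W" "u \<notin> W"
  shows "vec.dim (vec.span (insert u W)) = vec.dim W + 1"
proof -
  have sW: "vec.span W = W" using assms(1) by simp
  show ?thesis using assms by (simp add: vec.dim_insert sW)
qed

lemma dim_sum_int:
  assumes "vec.subspace A" "vec.subspace B"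
  shows "vec.dim (vec.span (A \<union> B)) + vec.dim (A \<inter> B) = vec.dim A + vec.dim B"
proof -
  have sA: "vec.span A = A" and sB: "vec.span B = B" using assms by simp_all
  have "vec.span (A \<union> B) = {x + y |x y. x \<in> A \<and> y \<in> B}"
    by (simp add: vec.span_Un sA sB)
  then show ?thesis using vec.dim_sums_Int[OF assms] by simp
qed

lemma dim_full:
  assumes "vec.subspace (A :: ('k^4) set)" "vec.dim A = 3" "vec.subspace B" "\<not> B \<subseteq> A"
  shows "vec.dim (vec.span (A \<union> B)) = 4"
proof -
  have sA: "vec.span A = A" using assms by simp
  have "vec.span A \<subset> vec.span (A \<union> B)"
    using assms vec.span_superset[of "A \<union> B"] vec.span_mono[of A "A \<union> B"] unfolding sA by auto
  then have "vec.dim A < vec.dim (A \<union> B)" by (rule vec.dim_psubset)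
  then show ?thesis using assms dim_le4[of "vec.span (A \<union> B)"] by simp
qed

lemma dim_int_3:
  assumes "vec.subspace (A :: ('k^4) set)" "vec.dim A = 3" "vec.subspace B" "\<not> B \<subseteq> A"
  shows "vec.dim (A \<inter> B) + 1 = vec.dim B"
  using dim_sum_int[of A B] dim_full[OF assms] assms by simp

lemma int_card_minus:
  fixes A B :: "('k^4) set"
  assumes "vec.subspace A" "vec.subspace B"
  shows "int (card (A - B)) = int CARD('k) ^ vec.dim A - int CARD('k) ^ vec.dim (A \<inter> B)"
proof -
  have e: "A - B = A - (A \<inter> B)" by auto
  show ?thesis unfolding e using int_card_diff[of "A \<inter> B" A, OF vec.subspace_inter[OF assms] assms(1)] by simp
qed

lemma int_card_Un:
  fixes A B :: "('k^4) set"
  assumes "vec.subspace A" "vec.subspace B"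
  shows "int (card (A \<union> B)) = int CARD('k) ^ vec.dim A + int CARD('k) ^ vec.dim B - int CARD('k) ^ vec.dim (A \<inter> B)"
proof -
  have "card (A \<union> B) + card (A \<inter> B) = card A + card B" using card_Un_Int[OF finW finW, of A B] by simp
  then have "int (card (A \<union> B)) + int (card (A \<inter> B)) = int (card A) + int (card B)" by linarith
  then show ?thesis using int_card_subspace[OF assms(1)] int_card_subspace[OF assms(2)] int_card_subspace[OF vec.subspace_inter[OF assms]] by (simp add: algebra_simps)
qed

lemma int_card_compl_set:
  "int (card (UNIV - (X :: ('k^4) set))) = int CARD('k) ^ 4 - int (card X)"
proof -
  have "card (UNIV - X) = card (UNIV::('k^4) set) - card X" by (simp add: card_Diff_subset finW)
  moreover have "card X \<le> card (UNIV::('k^4) set)" using finV card_mono by blast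
  ultimately show ?thesis using cardV by (simp add: of_nat_diff)
qed

lemma avoid_iff:
  assumes z: "vec.subspace z"
  shows "((u,v) \<in> IP \<and> vec.span {u,v} \<inter> z = {0}) \<longleftrightarrow> (u \<notin> z \<and> v \<notin> vec.span (insert u z))"
proof
  assume a: "(u,v) \<in> IP \<and> vec.span {u,v} \<inter> z = {0}"
  then have u0: "u \<noteq> 0" and vu: "v \<notin> vec.span {u}" by (auto simp: IP_def)
  have "u \<in> vec.span {u,v}" by (simp add: vec.span_base)
  then have uz: "u \<notin> z" using a u0 by auto
  have "v \<notin> vec.span (insert u z)"
  proof
    assume "v \<in> vec.span (insert u z)"
    then obtain k where k: "v - k *s u \<in> vec.span z" using vec.span_breakdown_eq by blast
    have sz: "vec.span z = z" using z by simp
    from k have kz: "v - k *s u \<in> z" unfolding sz .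
    have "v - k *s u \<in> vec.span {u,v}"
      by (intro vec.span_diff vec.span_scale) (auto simp: vec.span_base)
    then have "v - k *s u \<in> vec.span {u,v} \<inter> z" using kz by (rule IntI)
    then have "v - k *s u \<in> {0}" using conjunct2[OF a] by simp
    then have "v - k *s u = 0" by simp
    then have "v = k *s u" by simp
    then show False using vu unfolding vec.span_singleton by blast
  qed
  then show "u \<notin> z \<and> v \<notin> vec.span (insert u z)" using uz by simp
next
  assume a: "u \<notin> z \<and> v \<notin> vec.span (insert u z)"
  have u0: "u \<noteq> 0" using a vec.subspace_0[OF z] by auto
  have "vec.span {u} \<subseteq> vec.span (insert u z)" by (intro vec.span_mono) auto
  then have "v \<notin> vec.span {u}" using a by auto
  then have ip: "(u,v) \<in> IP" using u0 by (simp add: IP_def)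
  have "w = 0" if w: "w \<in> vec.span {u,v}" "w \<in> z" for w
  proof -
    obtain a b where ab: "w = a *s u + b *s v" using w span2 by blast
    have "b = 0"
    proof (rule ccontr)
      assume b: "b \<noteq> 0"
      have "v = inverse b *s (w - a *s u)" using ab b by (simp add: algebra_simps)
      moreover have "inverse b *s (w - a *s u) \<in> vec.span (insert u z)"
        using w by (intro vec.span_scale vec.span_diff) (auto simp: vec.span_base)
      ultimately show False using a by simp
    qed
    then have "a *s u \<in> z" using ab w by simp
    then have "a = 0" using a vec.subspace_scale[OF z, of "a *s u" "inverse a"] by (cases "a = 0") auto
    then show ?thesis using ab \<open>b = 0\<close> by simp
  qed
  then have "vec.span {u,v} \<inter> z = {0}" using vec.subspace_0[OF z] vec.span_zero by auto
  then show "(u,v) \<in> IP \<and> vec.span {u,v} \<inter> z = {0}" using ip by simp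
qed

lemma span_sub_iff:
  assumes "vec.subspace h"
  shows "vec.span {u,v} \<subseteq> h \<longleftrightarrow> u \<in> h \<and> v \<in> h"
  using assms vec.span_minimal[of "{u,v}" h] vec.span_base[of u "{u,v}"] vec.span_base[of v "{u,v}"] by auto

lemma line_span:
  assumes "x \<in> Lr 1" "u \<in> x" "u \<noteq> 0"
  shows "vec.span {u} = x"
proof (rule vec.subspace_dim_equal)
  show "vec.span {u} \<subseteq> x" using assms by (intro vec.span_minimal) (auto simp: Lr_def)
qed (use assms in \<open>auto simp: Lr_def\<close>)

lemma line_int:
  assumes "x \<in> Lr 1" "vec.subspace y"
  shows "x \<inter> y = {0} \<longleftrightarrow> \<not> x \<subseteq> y"
proof
  assume a: "x \<inter> y = {0}"
  have "vec.dim x = 1" using assms by (simp add: Lr_def)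
  then have "\<not> x \<subseteq> {0}" using vec.dim_eq_0[of x] by simp
  then show "\<not> x \<subseteq> y" using a by auto
next
  assume a: "\<not> x \<subseteq> y"
  have "w = 0" if "w \<in> x" "w \<in> y" for w
  proof (rule ccontr)
    assume "w \<noteq> 0"
    then have "x = vec.span {w}" using line_span[of x w] assms that by simp
    also have "\<dots> \<subseteq> y" using assms that by (intro vec.span_minimal) auto
    finally show False using a by simp
  qed
  moreover have "0 \<in> x" "0 \<in> y" using assms vec.subspace_0 by (auto simp: Lr_def)
  ultimately show "x \<inter> y = {0}" by auto
qed


lemma dc_const:
  assumes "\<And>y. y \<in> Lr 2 \<Longrightarrow> P y \<Longrightarrow> int (card (y \<inter> S - {0})) = c"
  shows "int (card {(u,v) \<in> IP. u \<in> S \<and> P (vec.span {u,v})})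
      = int (card {y \<in> Lr 2. P y}) * c * (int CARD('k) ^ 2 - int CARD('k))"
proof -
  have "(\<Sum>y\<in>{y \<in> Lr 2. P y}. int (card (y \<inter> S - {0}))) = (\<Sum>y\<in>{y \<in> Lr 2. P y}. c)"
    using assms by (intro sum.cong) auto
  then show ?thesis using double_count[of S P] by simp
qed

lemma card_y0:
  fixes y :: "('k^4) set"
  assumes "y \<in> Lr 2"
  shows "int (card (y \<inter> UNIV - {0})) = int CARD('k) ^ 2 - 1"
proof -
  have sy: "vec.subspace y" "vec.dim y = 2" using assms by (auto simp: Lr_def)
  have "card (y - {0}) = card y - 1" using vec.subspace_0[OF sy(1)] by (simp add: finW)
  moreover have "card y \<ge> 1" using vec.subspace_0[OF sy(1)] finW[of y] by (metis card_0_eq empty_iff less_one not_le)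
  ultimately show ?thesis using int_card_subspace[OF sy(1)] sy(2) by (simp add: of_nat_diff)
qed

lemma card_Sigma_const:
  fixes U :: "('k^4) set"
  assumes "\<And>u. u \<in> U \<Longrightarrow> int (card (V u :: ('k^4) set)) = c"
  shows "int (card (Sigma U V)) = int (card U) * c"
proof -
  have "card (Sigma U V) = (\<Sum>u\<in>U. card (V u))" by (simp add: finW)
  then have "int (card (Sigma U V)) = (\<Sum>u\<in>U. int (card (V u)))" by simp
  also have "\<dots> = (\<Sum>u\<in>U. c)" using assms by (intro sum.cong) auto
  finally show ?thesis by simp
qed

lemma cnt_avoid:
  fixes z :: "('k^4) set"
  assumes z: "vec.subspace z" and d: "vec.dim z \<le> 3"
  shows "int (card {y \<in> Lr 2. y \<inter> z = {0}}) * (int CARD('k) ^ 2 - 1) * (int CARD('k) ^ 2 - int CARD('k))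
       = (int CARD('k) ^ 4 - int CARD('k) ^ vec.dim z) * (int CARD('k) ^ 4 - int CARD('k) ^ (vec.dim z + 1))"
proof -
  have e: "{(u,v) \<in> IP. u \<in> UNIV \<and> (\<lambda>y. y \<inter> z = {0}) (vec.span {u,v})}
      = Sigma (UNIV - z) (\<lambda>u. UNIV - vec.span (insert u z))"
    using avoid_iff[OF z] by auto
  have c1: "int (card (UNIV - vec.span (insert u z))) = int CARD('k) ^ 4 - int CARD('k) ^ (vec.dim z + 1)"
    if "u \<in> UNIV - z" for u
    using that int_card_compl[of "vec.span (insert u z)"] dim_ins[OF z, of u] by simp
  have "int (card {(u,v) \<in> IP. u \<in> UNIV \<and> (\<lambda>y. y \<inter> z = {0}) (vec.span {u,v})})
      = int (card {y \<in> Lr 2. y \<inter> z = {0}}) * (int CARD('k) ^ 2 - 1) * (int CARD('k) ^ 2 - int CARD('k))"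
    by (rule dc_const) (rule card_y0)
  moreover have "int (card {(u,v) \<in> IP. u \<in> UNIV \<and> (\<lambda>y. y \<inter> z = {0}) (vec.span {u,v})})
      = (int CARD('k) ^ 4 - int CARD('k) ^ vec.dim z) * (int CARD('k) ^ 4 - int CARD('k) ^ (vec.dim z + 1))"
    unfolding e using card_Sigma_const[of "UNIV - z" "\<lambda>u. UNIV - vec.span (insert u z)", OF c1] int_card_compl[OF z] by simp
  ultimately show ?thesis by simp
qed

lemma cnt_in3:
  fixes h :: "('k^4) set"
  assumes h: "h \<in> Lr 3"
  shows "int (card {y \<in> Lr 2. y \<subseteq> h}) * (int CARD('k) ^ 2 - 1) * (int CARD('k) ^ 2 - int CARD('k))
       = (int CARD('k) ^ 3 - 1) * (int CARD('k) ^ 3 - int CARD('k))"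
proof -
  have sh: "vec.subspace h" "vec.dim h = 3" using h by (auto simp: Lr_def)
  have e: "{(u,v) \<in> IP. u \<in> UNIV \<and> (\<lambda>y. y \<subseteq> h) (vec.span {u,v})}
      = Sigma (h - {0}) (\<lambda>u. h - vec.span {u})"
    using span_sub_iff[OF sh(1)] by (auto simp: IP_def)
  have c1: "int (card (h - vec.span {u})) = int CARD('k) ^ 3 - int CARD('k)"
    if "u \<in> h - {0}" for u
    using that int_card_diff[of "vec.span {u}" h] sh vec.span_minimal[of "{u}" h] by simp
  have c0: "int (card (h - {0})) = int CARD('k) ^ 3 - 1"
    using int_card_diff[of "{0}" h] sh vec.subspace_0[OF sh(1)] by simp
  have "int (card {(u,v) \<in> IP. u \<in> UNIV \<and> (\<lambda>y. y \<subseteq> h) (vec.span {u,v})})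
      = int (card {y \<in> Lr 2. y \<subseteq> h}) * (int CARD('k) ^ 2 - 1) * (int CARD('k) ^ 2 - int CARD('k))"
    by (rule dc_const) (rule card_y0)
  moreover have "int (card {(u,v) \<in> IP. u \<in> UNIV \<and> (\<lambda>y. y \<subseteq> h) (vec.span {u,v})})
      = (int CARD('k) ^ 3 - 1) * (int CARD('k) ^ 3 - int CARD('k))"
    unfolding e using card_Sigma_const[of "h - {0}" "\<lambda>u. h - vec.span {u}", OF c1] c0 by simp
  ultimately show ?thesis by simp
qed

lemma cnt_e:
  fixes x z :: "('k^4) set"
  assumes x: "x \<in> Lr 1" and z: "z \<in> Lr 2" and nxz: "\<not> x \<subseteq> z"
  shows "int (card {y \<in> Lr 2. x \<subseteq> y \<and> y \<inter> z = {0}}) * (int CARD('k) - 1) * (int CARD('k) ^ 2 - int CARD('k))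
       = (int CARD('k) - 1) * (int CARD('k) ^ 4 - int CARD('k) ^ 3)"
proof -
  have sx: "vec.subspace x" "vec.dim x = 1" using x by (auto simp: Lr_def)
  have sz: "vec.subspace z" "vec.dim z = 2" using z by (auto simp: Lr_def)
  have xz: "x \<inter> z = {0}" using line_int[OF x sz(1)] nxz by simp
  have e: "{(u,v) \<in> IP. u \<in> x \<and> (\<lambda>y. x \<subseteq> y \<and> y \<inter> z = {0}) (vec.span {u,v})}
      = Sigma (x - {0}) (\<lambda>u. UNIV - vec.span (insert u z))"
  proof (rule set_eqI, clarify)
    fix u v
    have "x = vec.span {u}" if "u \<in> x" "u \<noteq> 0" using line_span[OF x that] by simp
    moreover have "vec.span {u} \<subseteq> vec.span {u,v}" by (intro vec.span_mono) auto
    moreover have "u \<notin> z" if "u \<in> x" "u \<noteq> 0" using that xz by auto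
    ultimately show "((u,v) \<in> {(u,v) \<in> IP. u \<in> x \<and> (\<lambda>y. x \<subseteq> y \<and> y \<inter> z = {0}) (vec.span {u,v})})
        = ((u,v) \<in> Sigma (x - {0}) (\<lambda>u. UNIV - vec.span (insert u z)))"
      using avoid_iff[OF sz(1), of u v] by (auto simp: IP_def)
  qed
  have c1: "int (card (UNIV - vec.span (insert u z))) = int CARD('k) ^ 4 - int CARD('k) ^ 3"
    if "u \<in> x - {0}" for u
  proof -
    have "u \<notin> z" using that xz by auto
    then show ?thesis using int_card_compl[of "vec.span (insert u z)"] dim_ins[OF sz(1), of u] sz by simp
  qed
  have c0: "int (card (x - {0})) = int CARD('k) - 1"
    using int_card_diff[of "{0}" x] sx vec.subspace_0[OF sx(1)] by simp
  have "int (card {(u,v) \<in> IP. u \<in> x \<and> (\<lambda>y. x \<subseteq> y \<and> y \<inter> z = {0}) (vec.span {u,v})})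
      = int (card {y \<in> Lr 2. x \<subseteq> y \<and> y \<inter> z = {0}}) * (int CARD('k) - 1) * (int CARD('k) ^ 2 - int CARD('k))"
  proof (rule dc_const)
    fix y assume "y \<in> Lr 2" "x \<subseteq> y \<and> y \<inter> z = {0}"
    then have "y \<inter> x - {0} = x - {0}" by auto
    then show "int (card (y \<inter> x - {0})) = int CARD('k) - 1" using c0 by simp
  qed
  moreover have "int (card {(u,v) \<in> IP. u \<in> x \<and> (\<lambda>y. x \<subseteq> y \<and> y \<inter> z = {0}) (vec.span {u,v})})
      = (int CARD('k) - 1) * (int CARD('k) ^ 4 - int CARD('k) ^ 3)"
    unfolding e using card_Sigma_const[of "x - {0}" "\<lambda>u. UNIV - vec.span (insert u z)", OF c1] c0 by simp
  ultimately show ?thesis by metis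
qed

lemma cnt_f:
  fixes h z :: "('k^4) set"
  assumes h: "h \<in> Lr 3" and z: "z \<in> Lr 2"
  shows "int (card {y \<in> Lr 2. y \<inter> z = {0} \<and> y \<subseteq> h}) * (int CARD('k) ^ 2 - 1) * (int CARD('k) ^ 2 - int CARD('k))
       = (if z \<subseteq> h then 0 else (int CARD('k) ^ 3 - int CARD('k)) * (int CARD('k) ^ 3 - int CARD('k) ^ 2))"
proof -
  have sh: "vec.subspace h" "vec.dim h = 3" using h by (auto simp: Lr_def)
  have sz: "vec.subspace z" "vec.dim z = 2" using z by (auto simp: Lr_def)
  have e: "{(u,v) \<in> IP. u \<in> UNIV \<and> (\<lambda>y. y \<inter> z = {0} \<and> y \<subseteq> h) (vec.span {u,v})}
      = Sigma (h - z) (\<lambda>u. h - vec.span (insert u z))"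
    using avoid_iff[OF sz(1)] span_sub_iff[OF sh(1)] by auto
  have "int (card {(u,v) \<in> IP. u \<in> UNIV \<and> (\<lambda>y. y \<inter> z = {0} \<and> y \<subseteq> h) (vec.span {u,v})})
      = int (card {y \<in> Lr 2. y \<inter> z = {0} \<and> y \<subseteq> h}) * (int CARD('k) ^ 2 - 1) * (int CARD('k) ^ 2 - int CARD('k))"
    by (rule dc_const) (rule card_y0)
  moreover have "int (card (Sigma (h - z) (\<lambda>u. h - vec.span (insert u z))))
      = (if z \<subseteq> h then 0 else (int CARD('k) ^ 3 - int CARD('k)) * (int CARD('k) ^ 3 - int CARD('k) ^ 2))"
  proof (cases "z \<subseteq> h")
    case True
    have "h - vec.span (insert u z) = {}" if "u \<in> h - z" for u
    proof -
      have "vec.span (insert u z) = h"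
      proof (rule vec.subspace_dim_equal)
        show "vec.span (insert u z) \<subseteq> h" using that True sh by (intro vec.span_minimal) auto
        show "vec.dim h \<le> vec.dim (vec.span (insert u z))" using dim_ins[OF sz(1), of u] that sz sh by simp
      qed (use sh in auto)
      then show ?thesis by simp
    qed
    then have "Sigma (h - z) (\<lambda>u. h - vec.span (insert u z)) = {}" by auto
    then show ?thesis using True by simp
  next
    case False
    have dhz: "vec.dim (h \<inter> z) = 1" using dim_int_3[OF sh sz(1) False] sz by simp
    have c1: "int (card (h - vec.span (insert u z))) = int CARD('k) ^ 3 - int CARD('k) ^ 2"
      if u: "u \<in> h - z" for u
    proof -
      let ?W = "vec.span (insert u z)"
      have sW: "vec.subspace ?W" "vec.dim ?W = 3" using dim_ins[OF sz(1), of u] u sz by auto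
      have "\<not> h \<subseteq> ?W"
      proof
        assume hW: "h \<subseteq> ?W"
        have "h = ?W" by (rule vec.subspace_dim_equal) (use sW sh hW in auto)
        moreover have "z \<subseteq> ?W" using vec.span_superset[of "insert u z"] by auto
        ultimately show False using False by simp
      qed
      then have "vec.dim (?W \<inter> h) = 2" using dim_int_3[OF sW sh(1)] sh by simp
      then have "vec.dim (h \<inter> ?W) = 2" by (simp add: Int_commute)
      then show ?thesis using int_card_minus[OF sh(1) sW(1)] sh by simp
    qed
    show ?thesis using card_Sigma_const[of "h - z" "\<lambda>u. h - vec.span (insert u z)", OF c1] int_card_minus[OF sh(1) sz(1)] False sh dhz by simp
  qed
  ultimately show ?thesis unfolding e by simp
qed


lemma logic4: "(I \<and> a \<longleftrightarrow> p \<and> q) \<Longrightarrow> (I \<and> b \<longleftrightarrow> r \<and> s) \<Longrightarrow> (I \<and> a \<and> b \<longleftrightarrow> p \<and> r \<and> q \<and> s)"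
  by blast

lemma pairs_g:
  fixes x z :: "('k^4) set"
  assumes x: "vec.subspace x" and z: "vec.subspace z"
  shows "int (card {y \<in> Lr 2. y \<inter> x = {0} \<and> y \<inter> z = {0}}) * (int CARD('k) ^ 2 - 1) * (int CARD('k) ^ 2 - int CARD('k))
       = int (card (Sigma (UNIV - (x \<union> z)) (\<lambda>u. UNIV - (vec.span (insert u x) \<union> vec.span (insert u z)))))"
proof -
  have e: "{(u,v) \<in> IP. u \<in> UNIV \<and> (\<lambda>y. y \<inter> x = {0} \<and> y \<inter> z = {0}) (vec.span {u,v})}
      = Sigma (UNIV - (x \<union> z)) (\<lambda>u. UNIV - (vec.span (insert u x) \<union> vec.span (insert u z)))"
  proof (rule set_eqI, clarify)
    fix u v
    show "((u,v) \<in> {(u,v) \<in> IP. u \<in> UNIV \<and> (\<lambda>y. y \<inter> x = {0} \<and> y \<inter> z = {0}) (vec.span {u,v})})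
      = ((u,v) \<in> Sigma (UNIV - (x \<union> z)) (\<lambda>u. UNIV - (vec.span (insert u x) \<union> vec.span (insert u z))))"
      unfolding mem_Collect_eq prod.case mem_Sigma_iff Diff_iff Un_iff
      using logic4[OF avoid_iff[OF x, of u v] avoid_iff[OF z, of u v]]
      by (simp only: UNIV_I simp_thms de_Morgan_disj conj_assoc)
  qed
  have "int (card {(u,v) \<in> IP. u \<in> UNIV \<and> (\<lambda>y. y \<inter> x = {0} \<and> y \<inter> z = {0}) (vec.span {u,v})})
      = int (card {y \<in> Lr 2. y \<inter> x = {0} \<and> y \<inter> z = {0}}) * (int CARD('k) ^ 2 - 1) * (int CARD('k) ^ 2 - int CARD('k))"
    by (rule dc_const) (rule card_y0)
  then show ?thesis unfolding e by simp
qed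

lemma percard_g:
  fixes x z :: "('k^4) set"
  assumes x: "x \<in> Lr 2" and z: "z \<in> Lr 2" and u: "u \<notin> x \<union> z"
  shows "int (card (UNIV - (vec.span (insert u x) \<union> vec.span (insert u z))))
     = int CARD('k) ^ 4 - 2 * int CARD('k) ^ 3 + int CARD('k) ^ vec.dim (vec.span (insert u x) \<inter> vec.span (insert u z))"
proof -
  have sx: "vec.subspace x" "vec.dim x = 2" using x by (auto simp: Lr_def)
  have sz: "vec.subspace z" "vec.dim z = 2" using z by (auto simp: Lr_def)
  have "vec.dim (vec.span (insert u x)) = 3" "vec.dim (vec.span (insert u z)) = 3"
    using dim_ins[OF sx(1), of u] dim_ins[OF sz(1), of u] u sx sz by auto
  then show ?thesis
    using int_card_compl_set[of "vec.span (insert u x) \<union> vec.span (insert u z)"]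
      int_card_Un[of "vec.span (insert u x)" "vec.span (insert u z)"] by simp
qed

lemma notsub_g:
  fixes x z :: "('k^4) set"
  assumes x: "x \<in> Lr 2" and z: "z \<in> Lr 2" and u: "u \<notin> x \<union> z"
    and nt: "\<not> vec.dim (vec.span (x \<union> z \<union> {u})) \<le> 3"
  shows "vec.dim (vec.span (insert u x) \<inter> vec.span (insert u z)) = 2"
proof -
  have sx: "vec.subspace x" "vec.dim x = 2" using x by (auto simp: Lr_def)
  have sz: "vec.subspace z" "vec.dim z = 2" using z by (auto simp: Lr_def)
  let ?A = "vec.span (insert u x)" and ?B = "vec.span (insert u z)"
  have dA: "vec.dim ?A = 3" "vec.dim ?B = 3"
    using dim_ins[OF sx(1), of u] dim_ins[OF sz(1), of u] u sx sz by auto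
  have nB: "\<not> ?B \<subseteq> ?A"
  proof
    assume BA: "?B \<subseteq> ?A"
    have "x \<union> z \<union> {u} \<subseteq> ?A"
      using BA vec.span_superset[of "insert u x"] vec.span_superset[of "insert u z"] by auto
    then have "vec.span (x \<union> z \<union> {u}) \<subseteq> ?A" by (intro vec.span_minimal) auto
    then have "vec.dim (vec.span (x \<union> z \<union> {u})) \<le> 3" using vec.dim_subset dA by metis
    then show False using nt by blast
  qed
  show ?thesis using dim_int_3[of ?A ?B] dA nB by simp
qed

lemma cnt_g0:
  fixes x z :: "('k^4) set"
  assumes x: "x \<in> Lr 2" and z: "z \<in> Lr 2" and xz: "x \<inter> z = {0}"
  shows "int (card {y \<in> Lr 2. y \<inter> x = {0} \<and> y \<inter> z = {0}}) * (int CARD('k) ^ 2 - 1) * (int CARD('k) ^ 2 - int CARD('k))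
       = (int CARD('k) ^ 4 - 2 * int CARD('k) ^ 2 + 1) * (int CARD('k) ^ 4 - 2 * int CARD('k) ^ 3 + int CARD('k) ^ 2)"
proof -
  have sx: "vec.subspace x" "vec.dim x = 2" using x by (auto simp: Lr_def)
  have sz: "vec.subspace z" "vec.dim z = 2" using z by (auto simp: Lr_def)
  have dxz: "vec.dim (vec.span (x \<union> z)) = 4" using dim_sum_int[OF sx(1) sz(1)] xz sx sz by simp
  have c1: "int (card (UNIV - (vec.span (insert u x) \<union> vec.span (insert u z))))
      = int CARD('k) ^ 4 - 2 * int CARD('k) ^ 3 + int CARD('k) ^ 2" if u: "u \<in> UNIV - (x \<union> z)" for u
  proof -
    have "vec.dim (vec.span (x \<union> z)) \<le> vec.dim (vec.span (x \<union> z \<union> {u}))"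
      by (intro vec.dim_subset vec.span_mono) auto
    then have nt: "\<not> vec.dim (vec.span (x \<union> z \<union> {u})) \<le> 3" using dxz by linarith
    have "u \<notin> x \<union> z" using u by blast
    then have "vec.dim (vec.span (insert u x) \<inter> vec.span (insert u z)) = 2"
      using notsub_g[OF x z _ nt] by blast
    then show ?thesis using percard_g[OF x z, of u] u by simp
  qed
  have c0: "int (card (UNIV - (x \<union> z))) = int CARD('k) ^ 4 - 2 * int CARD('k) ^ 2 + 1"
    using int_card_compl_set[of "x \<union> z"] int_card_Un[OF sx(1) sz(1)] sx sz xz by simp
  show ?thesis
    unfolding pairs_g[OF sx(1) sz(1)]
    using card_Sigma_const[of "UNIV - (x \<union> z)" "\<lambda>u. UNIV - (vec.span (insert u x) \<union> vec.span (insert u z))", OF c1] c0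
    by simp
qed

lemma cnt_g1:
  fixes x z :: "('k^4) set"
  assumes x: "x \<in> Lr 2" and z: "z \<in> Lr 2" and dxz: "vec.dim (x \<inter> z) = 1"
  shows "int (card {y \<in> Lr 2. y \<inter> x = {0} \<and> y \<inter> z = {0}}) * (int CARD('k) ^ 2 - 1) * (int CARD('k) ^ 2 - int CARD('k))
       = (int CARD('k) ^ 3 - 2 * int CARD('k) ^ 2 + int CARD('k)) * (int CARD('k) ^ 4 - int CARD('k) ^ 3)
         + (int CARD('k) ^ 4 - int CARD('k) ^ 3) * (int CARD('k) ^ 4 - 2 * int CARD('k) ^ 3 + int CARD('k) ^ 2)"
proof -
  have sx: "vec.subspace x" "vec.dim x = 2" using x by (auto simp: Lr_def)
  have sz: "vec.subspace z" "vec.dim z = 2" using z by (auto simp: Lr_def)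
  let ?T = "vec.span (x \<union> z)"
  have dT: "vec.dim ?T = 3" using dim_sum_int[OF sx(1) sz(1)] dxz sx sz by simp
  have xzT: "x \<union> z \<subseteq> ?T" by (rule vec.span_superset)
  let ?V = "\<lambda>u. UNIV - (vec.span (insert u x) \<union> vec.span (insert u z))"
  have c1: "int (card (?V u)) = int CARD('k) ^ 4 - int CARD('k) ^ 3" if u: "u \<in> ?T - (x \<union> z)" for u
  proof -
    have "vec.span (insert u x) = ?T"
    proof (rule vec.subspace_dim_equal)
      show "vec.span (insert u x) \<subseteq> ?T" using u xzT by (intro vec.span_minimal) auto
      show "vec.dim ?T \<le> vec.dim (vec.span (insert u x))" using dim_ins[OF sx(1), of u] u sx dT by simp
    qed auto
    moreover have "vec.span (insert u z) = ?T"
    proof (rule vec.subspace_dim_equal)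
      show "vec.span (insert u z) \<subseteq> ?T" using u xzT by (intro vec.span_minimal) auto
      show "vec.dim ?T \<le> vec.dim (vec.span (insert u z))" using dim_ins[OF sz(1), of u] u sz dT by simp
    qed auto
    ultimately show ?thesis using int_card_compl[of ?T] dT by simp
  qed
  have c2: "int (card (?V u)) = int CARD('k) ^ 4 - 2 * int CARD('k) ^ 3 + int CARD('k) ^ 2" if u: "u \<in> UNIV - ?T" for u
  proof -
    have ux: "u \<notin> x \<union> z" using u xzT by auto
    have "vec.dim (vec.span (insert u ?T)) = 4" using dim_ins[of ?T u] u dT by simp
    moreover have "vec.dim (vec.span (insert u ?T)) \<le> vec.dim (vec.span (x \<union> z \<union> {u}))"
    proof (intro vec.dim_subset)
      show "vec.span (insert u ?T) \<subseteq> vec.span (x \<union> z \<union> {u})"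
      proof (intro vec.span_minimal)
        have "?T \<subseteq> vec.span (x \<union> z \<union> {u})" by (intro vec.span_mono) auto
        then show "insert u ?T \<subseteq> vec.span (x \<union> z \<union> {u})" using vec.span_base[of u "x \<union> z \<union> {u}"] by auto
      qed auto
    qed
    ultimately have nt: "\<not> vec.dim (vec.span (x \<union> z \<union> {u})) \<le> 3" by linarith
    have "vec.dim (vec.span (insert u x) \<inter> vec.span (insert u z)) = 2"
      using notsub_g[OF x z ux nt] .
    then show ?thesis using percard_g[OF x z ux] by simp
  qed
  have split: "UNIV - (x \<union> z) = (?T - (x \<union> z)) \<union> (UNIV - ?T)" using xzT by auto
  have "Sigma (UNIV - (x \<union> z)) ?V = Sigma (?T - (x \<union> z)) ?V \<union> Sigma (UNIV - ?T) ?V"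
    unfolding split by (rule Sigma_Un_distrib1)
  then have "card (Sigma (UNIV - (x \<union> z)) ?V) = card (Sigma (?T - (x \<union> z)) ?V) + card (Sigma (UNIV - ?T) ?V)"
  proof -
    assume eqS: "Sigma (UNIV - (x \<union> z)) ?V = Sigma (?T - (x \<union> z)) ?V \<union> Sigma (UNIV - ?T) ?V"
    have "Sigma (?T - (x \<union> z)) ?V \<inter> Sigma (UNIV - ?T) ?V = {}" by blast
    then show ?thesis unfolding eqS using card_Un_disjoint[OF finP finP, of "Sigma (?T - (x \<union> z)) ?V" "Sigma (UNIV - ?T) ?V"] by simp
  qed
  then have "int (card (Sigma (UNIV - (x \<union> z)) ?V)) = int (card (Sigma (?T - (x \<union> z)) ?V)) + int (card (Sigma (UNIV - ?T) ?V))"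
    by simp
  also have "\<dots> = int (card (?T - (x \<union> z))) * (int CARD('k) ^ 4 - int CARD('k) ^ 3)
     + int (card (UNIV - ?T)) * (int CARD('k) ^ 4 - 2 * int CARD('k) ^ 3 + int CARD('k) ^ 2)"
    using card_Sigma_const[of "?T - (x \<union> z)" ?V, OF c1] card_Sigma_const[of "UNIV - ?T" ?V, OF c2] by simp
  also have "int (card (?T - (x \<union> z))) = int CARD('k) ^ 3 - 2 * int CARD('k) ^ 2 + int CARD('k)"
  proof -
    have "card (?T - (x \<union> z)) = card ?T - card (x \<union> z)" using xzT by (simp add: card_Diff_subset finW)
    moreover have "card (x \<union> z) \<le> card ?T" using xzT card_mono finW by blast
    ultimately have "int (card (?T - (x \<union> z))) = int (card ?T) - int (card (x \<union> z))" by (simp add: of_nat_diff)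
    then show ?thesis using int_card_subspace[of ?T] dT int_card_Un[OF sx(1) sz(1)] sx sz dxz by simp
  qed
  also have "int (card (UNIV - ?T)) = int CARD('k) ^ 4 - int CARD('k) ^ 3" using int_card_compl[of ?T] dT by simp
  finally show ?thesis unfolding pairs_g[OF sx(1) sz(1)] by simp
qed


lemma canc:
  fixes Q c d :: int
  assumes Q: "Q \<ge> 2" and e: "c * (Q^2 - 1) * (Q^2 - Q) = d * (Q^2 - 1) * (Q^2 - Q)"
  shows "c = d"
proof -
  have m: "Q * Q \<ge> 2 * Q" using Q by (intro mult_right_mono) auto
  have sq: "Q^2 = Q * Q" by (simp add: power2_eq_square)
  have a: "Q^2 - 1 \<noteq> 0" "Q^2 - Q \<noteq> 0" using m sq Q by linarith+
  then show ?thesis using e by simp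
qed

lemma canc1:
  fixes Q c d :: int
  assumes Q: "Q \<ge> 2" and e: "c * (Q - 1) * (Q^2 - Q) = d * (Q - 1) * (Q^2 - Q)"
  shows "c = d"
proof -
  have m: "Q * Q \<ge> 2 * Q" using Q by (intro mult_right_mono) auto
  have sq: "Q^2 = Q * Q" by (simp add: power2_eq_square)
  have a: "Q - 1 \<noteq> 0" "Q^2 - Q \<noteq> 0" using m sq Q by linarith+
  then show ?thesis using e by simp
qed

lemma Qge: "int CARD('k) \<ge> 2" using q2 by simp

lemma R_L2: "int (card (Lr 2 :: ('k^4) set set)) = (int CARD('k)^2 + 1) * (int CARD('k)^2 + int CARD('k) + 1)"
proof -
  let ?Q = "int CARD('k)"
  have e: "{y \<in> Lr 2. y \<inter> {0} = {0}} = (Lr 2 :: ('k^4) set set)"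
    by (auto simp: Lr_def vec.subspace_0)
  have "int (card (Lr 2 :: ('k^4) set set)) * (?Q^2 - 1) * (?Q^2 - ?Q) = (?Q^4 - 1) * (?Q^4 - ?Q)"
    using cnt_avoid[of "{0}"] unfolding e by simp
  also have "\<dots> = ((?Q^2 + 1) * (?Q^2 + ?Q + 1)) * (?Q^2 - 1) * (?Q^2 - ?Q)" by algebra
  finally show ?thesis using canc[OF Qge] by blast
qed

lemma R_a:
  fixes x :: "('k^4) set"
  assumes "x \<in> Lr 2"
  shows "int (card {y \<in> Lr 2. y \<inter> x = {0}}) = int CARD('k)^4"
proof -
  let ?Q = "int CARD('k)"
  have sx: "vec.subspace x" "vec.dim x = 2" using assms by (auto simp: Lr_def)
  have "int (card {y \<in> Lr 2. y \<inter> x = {0}}) * (?Q^2 - 1) * (?Q^2 - ?Q) = (?Q^4 - ?Q^2) * (?Q^4 - ?Q^3)"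
    using cnt_avoid[of x] sx by simp
  also have "\<dots> = ?Q^4 * (?Q^2 - 1) * (?Q^2 - ?Q)" by algebra
  finally show ?thesis using canc[OF Qge] by blast
qed

lemma R_c:
  fixes x :: "('k^4) set"
  assumes "x \<in> Lr 1"
  shows "int (card {y \<in> Lr 2. y \<inter> x = {0}}) = int CARD('k)^2 * (int CARD('k)^2 + int CARD('k) + 1)"
proof -
  let ?Q = "int CARD('k)"
  have sx: "vec.subspace x" "vec.dim x = 1" using assms by (auto simp: Lr_def)
  have "int (card {y \<in> Lr 2. y \<inter> x = {0}}) * (?Q^2 - 1) * (?Q^2 - ?Q) = (?Q^4 - ?Q) * (?Q^4 - ?Q^2)"
    using cnt_avoid[of x] sx by (simp add: power2_eq_square)
  also have "\<dots> = (?Q^2 * (?Q^2 + ?Q + 1)) * (?Q^2 - 1) * (?Q^2 - ?Q)" by algebra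
  finally show ?thesis using canc[OF Qge] by blast
qed

lemma R_d:
  fixes h :: "('k^4) set"
  assumes "h \<in> Lr 3"
  shows "int (card {y \<in> Lr 2. y \<subseteq> h}) = int CARD('k)^2 + int CARD('k) + 1"
proof -
  let ?Q = "int CARD('k)"
  have "int (card {y \<in> Lr 2. y \<subseteq> h}) * (?Q^2 - 1) * (?Q^2 - ?Q) = (?Q^3 - 1) * (?Q^3 - ?Q)"
    using cnt_in3[OF assms] by simp
  also have "\<dots> = (?Q^2 + ?Q + 1) * (?Q^2 - 1) * (?Q^2 - ?Q)" by algebra
  finally show ?thesis using canc[OF Qge] by blast
qed

lemma R_e:
  fixes x z :: "('k^4) set"
  assumes x: "x \<in> Lr 1" and z: "z \<in> Lr 2"
  shows "int (card {y \<in> Lr 2. x \<subseteq> y \<and> y \<inter> z = {0}}) = (if x \<subseteq> z then 0 else int CARD('k)^2)"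
proof (cases "x \<subseteq> z")
  case True
  have "\<not> x \<subseteq> {0}" using x vec.dim_eq_0[of x] by (simp add: Lr_def)
  then have e: "{y \<in> Lr 2. x \<subseteq> y \<and> y \<inter> z = {0}} = {}" using True by blast
  show ?thesis unfolding e using True by simp
next
  case False
  let ?Q = "int CARD('k)"
  have "int (card {y \<in> Lr 2. x \<subseteq> y \<and> y \<inter> z = {0}}) * (?Q - 1) * (?Q^2 - ?Q) = (?Q - 1) * (?Q^4 - ?Q^3)"
    using cnt_e[OF x z False] by simp
  also have "\<dots> = ?Q^2 * (?Q - 1) * (?Q^2 - ?Q)" by algebra
  finally have "int (card {y \<in> Lr 2. x \<subseteq> y \<and> y \<inter> z = {0}}) = ?Q^2" using canc1[OF Qge] by blast
  then show ?thesis using False by simp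
qed

lemma R_f:
  fixes h z :: "('k^4) set"
  assumes h: "h \<in> Lr 3" and z: "z \<in> Lr 2"
  shows "int (card {y \<in> Lr 2. y \<inter> z = {0} \<and> y \<subseteq> h}) = (if z \<subseteq> h then 0 else int CARD('k)^2)"
proof -
  let ?Q = "int CARD('k)"
  have "int (card {y \<in> Lr 2. y \<inter> z = {0} \<and> y \<subseteq> h}) * (?Q^2 - 1) * (?Q^2 - ?Q)
      = (if z \<subseteq> h then 0 else ?Q^2) * (?Q^2 - 1) * (?Q^2 - ?Q)"
  proof -
    have "(?Q^3 - ?Q) * (?Q^3 - ?Q^2) = ?Q^2 * (?Q^2 - 1) * (?Q^2 - ?Q)" by algebra
    then show ?thesis using cnt_f[OF h z] by simp
  qed
  then show ?thesis using canc[OF Qge] by blast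
qed

lemma R_g0:
  fixes x z :: "('k^4) set"
  assumes x: "x \<in> Lr 2" and z: "z \<in> Lr 2" and xz: "x \<inter> z = {0}"
  shows "int (card {y \<in> Lr 2. y \<inter> x = {0} \<and> y \<inter> z = {0}})
       = int CARD('k) * ((int CARD('k) - 1) * (int CARD('k)^2 - 1))"
proof -
  let ?Q = "int CARD('k)"
  have "int (card {y \<in> Lr 2. y \<inter> x = {0} \<and> y \<inter> z = {0}}) * (?Q^2 - 1) * (?Q^2 - ?Q)
     = (?Q^4 - 2 * ?Q^2 + 1) * (?Q^4 - 2 * ?Q^3 + ?Q^2)" by (rule cnt_g0[OF x z xz])
  also have "\<dots> = (?Q * ((?Q - 1) * (?Q^2 - 1))) * (?Q^2 - 1) * (?Q^2 - ?Q)" by algebra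
  finally show ?thesis using canc[OF Qge] by blast
qed

lemma R_g1:
  fixes x z :: "('k^4) set"
  assumes x: "x \<in> Lr 2" and z: "z \<in> Lr 2" and xz: "vec.dim (x \<inter> z) = 1"
  shows "int (card {y \<in> Lr 2. y \<inter> x = {0} \<and> y \<inter> z = {0}}) = int CARD('k)^3 * (int CARD('k) - 1)"
proof -
  let ?Q = "int CARD('k)"
  have "int (card {y \<in> Lr 2. y \<inter> x = {0} \<and> y \<inter> z = {0}}) * (?Q^2 - 1) * (?Q^2 - ?Q)
     = (?Q^3 - 2 * ?Q^2 + ?Q) * (?Q^4 - ?Q^3) + (?Q^4 - ?Q^3) * (?Q^4 - 2 * ?Q^3 + ?Q^2)" by (rule cnt_g1[OF x z xz])
  also have "\<dots> = (?Q^3 * (?Q - 1)) * (?Q^2 - 1) * (?Q^2 - ?Q)" by algebra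
  finally show ?thesis using canc[OF Qge] by blast
qed

lemma H_mod:
  fixes x z :: "('k^4) set"
  assumes x: "x \<in> Lr 2" and z: "z \<in> Lr 2"
  shows "int CARD('k)^3 dvd int (card {y \<in> Lr 2. y \<inter> z = {0} \<and> x \<inter> y = {0}})
     - int CARD('k) * ((int CARD('k) - 1) * (int CARD('k)^2 - 1)) * (if x \<inter> z = {0} then 1 else 0)"
proof -
  let ?Q = "int CARD('k)"
  have sx: "vec.subspace x" "vec.dim x = 2" using x by (auto simp: Lr_def)
  have sz: "vec.subspace z" "vec.dim z = 2" using z by (auto simp: Lr_def)
  have ce: "{y \<in> Lr 2. y \<inter> z = {0} \<and> x \<inter> y = {0}} = {y \<in> Lr 2. y \<inter> x = {0} \<and> y \<inter> z = {0}}"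
    by (auto simp: Int_commute)
  have d: "vec.dim (x \<inter> z) \<le> 2" using vec.dim_subset[of "x \<inter> z" x] sx by simp
  consider "vec.dim (x \<inter> z) = 0" | "vec.dim (x \<inter> z) = 1" | "vec.dim (x \<inter> z) = 2" using d by linarith
  then show ?thesis
  proof cases
    case 1
    then have "x \<inter> z \<subseteq> {0}" by simp
    then have xz: "x \<inter> z = {0}" using vec.subspace_0[OF sx(1)] vec.subspace_0[OF sz(1)] by auto
    show ?thesis unfolding ce using R_g0[OF x z xz] xz by simp
  next
    case 2
    have "x \<inter> z \<noteq> {0}"
    proof
      assume "x \<inter> z = {0}"
      then have "vec.dim (x \<inter> z) = 0" by simp
      then show False using 2 by simp
    qed
    then show ?thesis unfolding ce using R_g1[OF x z 2] by simp
  next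
    case 3
    have "x \<inter> z = x" by (rule vec.subspace_dim_equal) (use sx sz 3 vec.subspace_inter in auto)
    moreover have "x \<inter> z = z" by (rule vec.subspace_dim_equal) (use sx sz 3 vec.subspace_inter in auto)
    ultimately have xz: "x = z" by simp
    have "\<not> z \<subseteq> {0}" using sz vec.dim_eq_0[of z] by simp
    then have "z \<inter> z \<noteq> {0}" by auto
    moreover have "{y \<in> Lr 2. y \<inter> z = {0} \<and> z \<inter> y = {0}} = {y \<in> Lr 2. y \<inter> z = {0}}" by (auto simp: Int_commute)
    ultimately show ?thesis using R_a[OF z] xz by (simp add: le_imp_power_dvd)
  qed
qed


end

definition liftk :: "'k::field \<Rightarrow> int" where
  "liftk c = (if c = 0 then 0 else (SOME i. of_int i = c))"

definition oneZ :: "('k::field^4) set \<Rightarrow> int" where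
  "oneZ x = (if x \<in> Lr 2 then 1 else 0)"

lemma hom_eta: "(of_int (eta m y) :: 'k::field) = eta (\<lambda>x. of_int (m x)) (y :: ('k^4) set)"
  by (simp add: eta_def)

lemma hom_phi: "(of_int (phi m y) :: 'k::field) = phi (\<lambda>x. of_int (m x)) (y :: ('k^4) set)"
  by (simp add: phi_def)

lemma hom_psi: "(of_int (psi m y) :: 'k::field) = psi (\<lambda>x. of_int (m x)) (y :: ('k^4) set)"
  by (simp add: psi_def)

lemma eta_add: "eta (\<lambda>x. f x + g x) y = eta f y + eta g y"
  by (simp add: eta_def sum.distrib)

lemma eta_diff: "eta (\<lambda>x. f x - g x) y = eta f y - eta g y"
  by (simp add: eta_def sum_subtractf)

lemma eta_cmult: "eta (\<lambda>x. c * f x) y = c * eta f y"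
  by (simp add: eta_def sum_distrib_left)

lemma swapc:
  fixes f :: "'a \<Rightarrow> 'r::comm_ring_1"
  assumes "finite A" "finite B"
  shows "(\<Sum>y\<in>B. \<Sum>x\<in>{x\<in>A. R x y}. f x) = (\<Sum>x\<in>A. f x * of_nat (card {y\<in>B. R x y}))"
proof -
  have "(\<Sum>y\<in>B. \<Sum>x\<in>{x\<in>A. R x y}. f x) = (\<Sum>x\<in>A. \<Sum>y\<in>{y\<in>B. R x y}. f x)"
    using sum.swap_restrict[OF assms, of "\<lambda>x y. f x" R] by simp
  also have "\<dots> = (\<Sum>x\<in>A. of_nat (card {y\<in>B. R x y}) * f x)"
    by simp
  also have "\<dots> = (\<Sum>x\<in>A. f x * of_nat (card {y\<in>B. R x y}))"
    by (intro sum.cong refl) (rule mult.commute)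
  finally show ?thesis .
qed

lemma card_split_int:
  assumes "finite A"
  shows "int (card {y\<in>A. P y}) = int (card {y\<in>A. P y \<and> R y}) + int (card {y\<in>A. P y \<and> \<not> R y})"
proof -
  have "{y\<in>A. P y} = {y\<in>A. P y \<and> R y} \<union> {y\<in>A. P y \<and> \<not> R y}" by auto
  moreover have "card ({y\<in>A. P y \<and> R y} \<union> {y\<in>A. P y \<and> \<not> R y}) = card {y\<in>A. P y \<and> R y} + card {y\<in>A. P y \<and> \<not> R y}"
    by (rule card_Un_disjoint) (use assms in auto)
  ultimately show ?thesis by simp
qed

context
  fixes p :: nat
  assumes pr: "prime p" and cp: "CARD('k::field) = p"
begin

lemma finK': "finite (UNIV :: 'k set)"
proof (rule ccontr)
  assume "infinite (UNIV :: 'k set)"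
  then have "CARD('k) = 0" by simp
  then show False using cp pr by simp
qed

lemma Fchar: "(of_nat p :: 'k) = 0"
proof -
  have "(\<Sum>x\<in>(UNIV::'k set). x + 1) = (\<Sum>x\<in>UNIV. x)"
    by (rule sum.reindex_bij_witness[of _ "\<lambda>x. x - 1" "\<lambda>x. x + 1"]) auto
  then have "(\<Sum>x\<in>(UNIV::'k set). x) + of_nat CARD('k) = (\<Sum>x\<in>UNIV. x)"
    by (simp add: sum.distrib)
  then show ?thesis using cp by simp
qed

lemma Fchar_int: "(of_int (int p) :: 'k) = 0"
  using Fchar by simp

lemma Fdvd:
  assumes "(of_int z :: 'k) = 0"
  shows "int p dvd z"
proof (rule ccontr)
  assume nd: "\<not> int p dvd z"
  have "prime (int p)" using pr by simp
  then have "coprime (int p) z" using nd prime_imp_coprime by blast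
  then have "gcd (int p) z = 1" by simp
  then obtain u v where "u * int p + v * z = 1" using bezout_int[of "int p" z] by auto
  then have "(of_int (u * int p + v * z) :: 'k) = 1" by simp
  then show False using assms Fchar_int by simp
qed

lemma Fsurj: "\<exists>i. (of_int i :: 'k) = c"
proof -
  let ?f = "\<lambda>i::nat. (of_nat i :: 'k)"
  have inj: "inj_on ?f {..<p}"
  proof (rule inj_onI)
    fix i j assume i: "i \<in> {..<p}" and j: "j \<in> {..<p}" and e: "?f i = ?f j"
    have "(of_int (int i - int j) :: 'k) = 0" using e by simp
    then have d: "int p dvd int i - int j" by (rule Fdvd)
    show "i = j"
    proof (rule ccontr)
      assume "i \<noteq> j"
      then have "int i - int j \<noteq> 0" by simp
      then have "\<bar>int p\<bar> \<le> \<bar>int i - int j\<bar>" using dvd_imp_le_int d by blast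
      then show False using i j by auto
    qed
  qed
  have "card (?f ` {..<p}) = p" using card_image[OF inj] by simp
  then have "?f ` {..<p} = UNIV"
    using cp finK' by (metis card_subset_eq subset_UNIV)
  then obtain i where "c = ?f i" by (metis UNIV_I imageE)
  then show ?thesis by (intro exI[of _ "int i"]) simp
qed

lemma lift: "(of_int (liftk c) :: 'k) = c"
proof (cases "c = 0")
  case False
  then show ?thesis unfolding liftk_def using someI_ex[OF Fsurj[of c]] by simp
qed (simp add: liftk_def)

lemma lift0: "liftk (0::'k) = 0" by (simp add: liftk_def)

lemma liftRL: "(m :: ('k^4) set \<Rightarrow> 'k) \<in> RL r \<Longrightarrow> (\<lambda>x. liftk (m x)) \<in> RL r"
  by (simp add: RL_def lift0)

lemma redp_lift: "(\<lambda>x. (of_int (liftk (m x)) :: 'k)) = m"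
  by (simp add: lift)

lemma ofnat_zero: "int n = int p * t \<Longrightarrow> (of_nat n :: 'k) = 0"
proof -
  assume "int n = int p * t"
  then have "(of_int (int n) :: 'k) = of_int (int p) * of_int t" by simp
  then show ?thesis using Fchar_int by simp
qed

lemma K_L2: "(of_nat (card (Lr 2 :: ('k^4) set set)) :: 'k) = 1"
proof -
  have "(of_int (int (card (Lr 2 :: ('k^4) set set))) :: 'k)
      = of_int ((int CARD('k)^2 + 1) * (int CARD('k)^2 + int CARD('k) + 1))"
    using R_L2[OF finK'] by simp
  also have "\<dots> = 1" using Fchar_int cp by simp
  finally show ?thesis by simp
qed

lemma K_phi:
  assumes "(x :: ('k^4) set) \<in> Lr 1"
  shows "(of_nat (card {y\<in>Lr 2. x \<inter> y = {0}}) :: 'k) = 0"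
proof -
  have "{y\<in>Lr 2. x \<inter> y = {0}} = {y\<in>Lr 2. y \<inter> x = {0}}" by (auto simp: Int_commute)
  then have "int (card {y\<in>Lr 2. x \<inter> y = {0}}) = int p * (int p * (int p^2 + int p + 1))"
    using R_c[OF finK' assms] cp by (simp add: power2_eq_square)
  then show ?thesis by (rule ofnat_zero)
qed

lemma card_L3:
  assumes "(h :: ('k^4) set) \<in> Lr 3"
  shows "int (card {y\<in>Lr 2. h \<inter> y \<noteq> y}) = int p * (int p * (int p^2 + int p + 1))"
proof -
  have "int (card (Lr 2 :: ('k^4) set set)) = int (card {y\<in>Lr 2. y \<subseteq> h}) + int (card {y\<in>Lr 2. \<not> y \<subseteq> h})"
    using card_split_int[OF finL[OF finK'], of 2 "\<lambda>y. True" "\<lambda>y. y \<subseteq> h"] by simp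
  moreover have "{y\<in>Lr 2. h \<inter> y \<noteq> y} = {y\<in>Lr 2. \<not> y \<subseteq> h}" by auto
  ultimately show ?thesis using R_L2[OF finK'] R_d[OF finK' assms] cp by (simp add: algebra_simps power2_eq_square)
qed

lemma K_psi:
  assumes "(h :: ('k^4) set) \<in> Lr 3"
  shows "(of_nat (card {y\<in>Lr 2. h \<inter> y \<noteq> y}) :: 'k) = 0"
  using card_L3[OF assms] by (rule ofnat_zero)

lemma K_eta:
  assumes "(x :: ('k^4) set) \<in> Lr 2"
  shows "(of_nat (card {y\<in>Lr 2. x \<inter> y = {0}}) :: 'k) = 0"
proof -
  have "{y\<in>Lr 2. x \<inter> y = {0}} = {y\<in>Lr 2. y \<inter> x = {0}}" by (auto simp: Int_commute)
  moreover have "int p ^ 4 = int p * int p ^ 3" by algebra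
  ultimately have "int (card {y\<in>Lr 2. x \<inter> y = {0}}) = int p * int p ^ 3"
    using R_a[OF finK' assms] cp by simp
  then show ?thesis by (rule ofnat_zero)
qed


lemma finL': "finite (Lr r :: ('k^4) set set)" by (rule finL[OF finK'])

lemma sum_phi:
  fixes a :: "('k^4) set \<Rightarrow> 'r::comm_ring_1"
  assumes "B \<subseteq> Lr 2"
  shows "(\<Sum>y\<in>B. phi a y) = (\<Sum>x\<in>Lr 1. a x * of_nat (card {y\<in>B. x \<inter> y = {0}}))"
proof -
  have fB: "finite B" using finite_subset[OF assms finL'] .
  have "(\<Sum>y\<in>B. phi a y) = (\<Sum>y\<in>B. \<Sum>x\<in>{x\<in>Lr 1. x \<inter> y = {0}}. a x)"
    using assms by (intro sum.cong refl) (auto simp: phi_def)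
  also have "\<dots> = (\<Sum>x\<in>Lr 1. a x * of_nat (card {y\<in>B. x \<inter> y = {0}}))"
    by (rule swapc[OF finL' fB])
  finally show ?thesis .
qed

lemma sum_psi:
  fixes a :: "('k^4) set \<Rightarrow> 'r::comm_ring_1"
  assumes "B \<subseteq> Lr 2"
  shows "(\<Sum>y\<in>B. psi a y) = (\<Sum>x\<in>Lr 3. a x * of_nat (card {y\<in>B. x \<inter> y \<noteq> y}))"
proof -
  have fB: "finite B" using finite_subset[OF assms finL'] .
  have "(\<Sum>y\<in>B. psi a y) = (\<Sum>y\<in>B. \<Sum>x\<in>{x\<in>Lr 3. x \<inter> y \<noteq> y}. a x)"
    using assms by (intro sum.cong refl) (auto simp: psi_def)
  also have "\<dots> = (\<Sum>x\<in>Lr 3. a x * of_nat (card {y\<in>B. x \<inter> y \<noteq> y}))"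
    by (rule swapc[OF finL' fB])
  finally show ?thesis .
qed

lemma sum_eta:
  fixes a :: "('k^4) set \<Rightarrow> 'r::comm_ring_1"
  assumes "B \<subseteq> Lr 2"
  shows "(\<Sum>y\<in>B. eta a y) = (\<Sum>x\<in>Lr 2. a x * of_nat (card {y\<in>B. x \<inter> y = {0}}))"
proof -
  have fB: "finite B" using finite_subset[OF assms finL'] .
  have "(\<Sum>y\<in>B. eta a y) = (\<Sum>y\<in>B. \<Sum>x\<in>{x\<in>Lr 2. x \<inter> y = {0}}. a x)"
    using assms by (intro sum.cong refl) (auto simp: eta_def)
  also have "\<dots> = (\<Sum>x\<in>Lr 2. a x * of_nat (card {y\<in>B. x \<inter> y = {0}}))"
    by (rule swapc[OF finL' fB])
  finally show ?thesis .
qed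

lemma eta_out: "z \<notin> Lr 2 \<Longrightarrow> eta f (z :: ('k^4) set) = 0"
  by (simp add: eta_def)

lemma eta_oneZ:
  assumes "(z :: ('k^4) set) \<in> Lr 2"
  shows "eta oneZ z = int p ^ 4"
proof -
  have "eta oneZ z = (\<Sum>x\<in>{x\<in>Lr 2. x \<inter> z = {0}}. 1)"
    using assms by (simp add: eta_def oneZ_def)
  also have "\<dots> = int (card {x\<in>Lr 2. x \<inter> z = {0}})" by simp
  also have "\<dots> = int p ^ 4" using R_a[OF finK' assms] cp by simp
  finally show ?thesis .
qed

lemma D_phi:
  assumes x: "(x :: ('k^4) set) \<in> Lr 1" and z: "z \<in> Lr 2"
  shows "int p ^ 2 dvd int (card {y\<in>{y\<in>Lr 2. y \<inter> z = {0}}. x \<inter> y = {0}})"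
proof -
  have e1: "{y\<in>{y\<in>Lr 2. y \<inter> z = {0}}. x \<inter> y = {0}} = {y\<in>Lr 2. y \<inter> z = {0} \<and> \<not> x \<subseteq> y}"
    using line_int[OF finK' x] by (auto simp: Lr_def)
  have e2: "{y\<in>Lr 2. y \<inter> z = {0} \<and> x \<subseteq> y} = {y\<in>Lr 2. x \<subseteq> y \<and> y \<inter> z = {0}}" by auto
  have "int (card {y\<in>Lr 2. y \<inter> z = {0}}) = int (card {y\<in>Lr 2. y \<inter> z = {0} \<and> x \<subseteq> y}) + int (card {y\<in>Lr 2. y \<inter> z = {0} \<and> \<not> x \<subseteq> y})"
    by (rule card_split_int[OF finL'])
  then have "int (card {y\<in>Lr 2. y \<inter> z = {0} \<and> \<not> x \<subseteq> y}) = int p ^ 4 - (if x \<subseteq> z then 0 else int p ^ 2)"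
    using R_a[OF finK' z] R_e[OF finK' x z] cp unfolding e2 by simp
  moreover have "int p ^ 2 dvd int p ^ 4 - (if x \<subseteq> z then 0 else int p ^ 2)"
    by (simp add: le_imp_power_dvd)
  ultimately show ?thesis unfolding e1 by simp
qed

lemma D_psi:
  assumes h: "(h :: ('k^4) set) \<in> Lr 3" and z: "z \<in> Lr 2"
  shows "int p ^ 2 dvd int (card {y\<in>{y\<in>Lr 2. y \<inter> z = {0}}. h \<inter> y \<noteq> y})"
proof -
  have e1: "{y\<in>{y\<in>Lr 2. y \<inter> z = {0}}. h \<inter> y \<noteq> y} = {y\<in>Lr 2. y \<inter> z = {0} \<and> \<not> y \<subseteq> h}"
    by auto
  have "int (card {y\<in>Lr 2. y \<inter> z = {0}}) = int (card {y\<in>Lr 2. y \<inter> z = {0} \<and> y \<subseteq> h}) + int (card {y\<in>Lr 2. y \<inter> z = {0} \<and> \<not> y \<subseteq> h})"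
    by (rule card_split_int[OF finL'])
  then have "int (card {y\<in>Lr 2. y \<inter> z = {0} \<and> \<not> y \<subseteq> h}) = int p ^ 4 - (if z \<subseteq> h then 0 else int p ^ 2)"
    using R_a[OF finK' z] R_f[OF finK' h z] cp by simp
  moreover have "int p ^ 2 dvd int p ^ 4 - (if z \<subseteq> h then 0 else int p ^ 2)"
    by (simp add: le_imp_power_dvd)
  ultimately show ?thesis unfolding e1 by simp
qed

lemma RL0: "(\<lambda>x. 0) \<in> RL r" by (simp add: RL_def)

lemma one_ofint: "(of_int (oneZ x) :: 'k) = one x" by (simp add: oneZ_def one_def)

lemma sum_one: "(\<Sum>y\<in>Lr 2. c * one y) = c * (of_nat (card (Lr 2 :: ('k^4) set set)) :: 'k)"
proof -
  have "(\<Sum>y\<in>Lr 2. c * one y) = (\<Sum>y\<in>(Lr 2 :: ('k^4) set set). c)" by (intro sum.cong) (auto simp: one_def)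
  then show ?thesis by (simp add: mult.commute)
qed

lemma part1: "(ker_etabar :: (('k^4) set \<Rightarrow> 'k) set) \<subseteq> Mbar p 1"
proof
  fix v :: "('k^4) set \<Rightarrow> 'k"
  assume "v \<in> ker_etabar"
  then have v: "v \<in> RL 2" "\<forall>y. eta v y = 0" by (auto simp: ker_etabar_def)
  let ?m = "\<lambda>x. liftk (v x)"
  have "?m \<in> M p 1"
    unfolding M_def
  proof (intro CollectI conjI allI)
    show "?m \<in> RL 2" using liftRL v(1) .
    fix y
    have "(of_int (eta ?m y) :: 'k) = eta v y" by (simp add: hom_eta lift)
    then show "int p ^ 1 dvd eta ?m y" using v(2) Fdvd by simp
  qed
  moreover have "redp ?m = v" by (simp add: redp_def lift)
  ultimately show "v \<in> Mbar p 1" unfolding Mbar_def by (metis image_eqI)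
qed

lemma zero_in_setsum: "(\<lambda>x. 0) \<in> setsum A B" if "(\<lambda>x. 0) \<in> A" "(\<lambda>x. 0) \<in> B"
  unfolding setsum_def using that by (intro CollectI exI[of _ "\<lambda>x. 0"]) auto

lemma zero_line: "(\<lambda>x. 0) \<in> (line_one :: (('k^4) set \<Rightarrow> 'k) set)"
  unfolding line_one_def by (intro CollectI exI[of _ 0]) auto

lemma part2a: "(line_one :: (('k^4) set \<Rightarrow> 'k) set) \<inter> setsum im_phibar im_psibar = {\<lambda>x. 0}"
proof
  show "(line_one :: (('k^4) set \<Rightarrow> 'k) set) \<inter> setsum im_phibar im_psibar \<subseteq> {\<lambda>x. 0}"
  proof
    fix f :: "('k^4) set \<Rightarrow> 'k"
    assume "f \<in> line_one \<inter> setsum im_phibar im_psibar"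
    then obtain c a b where f1: "f = (\<lambda>x. c * one x)" and f2: "f = (\<lambda>x. phi a x + psi b x)"
      and a: "a \<in> RL 1" and b: "b \<in> RL 3"
      unfolding line_one_def setsum_def im_phibar_def im_psibar_def by blast
    have "(\<Sum>y\<in>Lr 2. f y) = c" using f1 sum_one K_L2 by simp
    moreover have "(\<Sum>y\<in>Lr 2. f y) = (\<Sum>y\<in>Lr 2. phi a y) + (\<Sum>y\<in>Lr 2. psi b y)"
      using f2 by (simp add: sum.distrib)
    moreover have "(\<Sum>y\<in>Lr 2. phi a y) = 0"
      using sum_phi[of "Lr 2" a] K_phi by simp
    moreover have "(\<Sum>y\<in>Lr 2. psi b y) = 0"
      using sum_psi[of "Lr 2" b] K_psi by simp
    ultimately have "c = 0" by simp
    then show "f \<in> {\<lambda>x. 0}" using f1 by simp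
  qed
  have p0: "phi (\<lambda>x. 0) = (\<lambda>y::('k^4) set. 0::'k)" by (rule ext) (simp add: phi_def)
  have q0: "psi (\<lambda>x. 0) = (\<lambda>y::('k^4) set. 0::'k)" by (rule ext) (simp add: psi_def)
  have "(\<lambda>x. 0) \<in> (im_phibar :: (('k^4) set \<Rightarrow> 'k) set)"
    unfolding im_phibar_def using p0 RL0 by (metis image_eqI)
  moreover have "(\<lambda>x. 0) \<in> (im_psibar :: (('k^4) set \<Rightarrow> 'k) set)"
    unfolding im_psibar_def using q0 RL0 by (metis image_eqI)
  ultimately show "{\<lambda>x. 0} \<subseteq> (line_one :: (('k^4) set \<Rightarrow> 'k) set) \<inter> setsum im_phibar im_psibar"
    using zero_in_setsum zero_line by auto
qed

lemma part3a: "(line_one :: (('k^4) set \<Rightarrow> 'k) set) \<inter> im_etabar = {\<lambda>x. 0}"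
proof
  show "(line_one :: (('k^4) set \<Rightarrow> 'k) set) \<inter> im_etabar \<subseteq> {\<lambda>x. 0}"
  proof
    fix f :: "('k^4) set \<Rightarrow> 'k"
    assume "f \<in> line_one \<inter> im_etabar"
    then obtain c v where f1: "f = (\<lambda>x. c * one x)" and f2: "f = eta v" and v: "v \<in> RL 2"
      unfolding line_one_def im_etabar_def by blast
    have "(\<Sum>y\<in>Lr 2. f y) = c" using f1 sum_one K_L2 by simp
    moreover have "(\<Sum>y\<in>Lr 2. f y) = 0"
      using f2 sum_eta[of "Lr 2" v] K_eta by simp
    ultimately have "c = 0" by simp
    then show "f \<in> {\<lambda>x. 0}" using f1 by simp
  qed
  have e0: "eta (\<lambda>x. 0) = (\<lambda>y::('k^4) set. 0::'k)" by (rule ext) (simp add: eta_def)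
  have "(\<lambda>x. 0) \<in> (im_etabar :: (('k^4) set \<Rightarrow> 'k) set)"
    unfolding im_etabar_def using e0 RL0 by (metis image_eqI)
  then show "{\<lambda>x. 0} \<subseteq> (line_one :: (('k^4) set \<Rightarrow> 'k) set) \<inter> im_etabar"
    using zero_line by auto
qed


lemma part4: "(line_one :: (('k^4) set \<Rightarrow> 'k) set) \<subseteq> Mbar p 4"
proof
  fix g :: "('k^4) set \<Rightarrow> 'k"
  assume "g \<in> line_one"
  then obtain c where g: "g = (\<lambda>x. c * one x)" unfolding line_one_def by blast
  obtain c' where c': "(of_int c' :: 'k) = c" using Fsurj by blast
  let ?m = "\<lambda>x::('k^4) set. c' * oneZ x"
  have "?m \<in> M p 4"
    unfolding M_def
  proof (intro CollectI conjI allI)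
    show "?m \<in> RL 2" by (simp add: RL_def oneZ_def)
    fix z
    show "int p ^ 4 dvd eta ?m z"
    proof (cases "z \<in> Lr 2")
      case True then show ?thesis using eta_oneZ[OF True] by (simp add: eta_cmult)
    next
      case False then show ?thesis by (simp add: eta_out)
    qed
  qed
  moreover have "redp ?m = g" unfolding g redp_def by (simp add: c' one_ofint)
  ultimately show "g \<in> Mbar p 4" unfolding Mbar_def using image_eqI[of g redp ?m "M p 4"] by simp
qed

lemma part2b: "setsum (line_one :: (('k^4) set \<Rightarrow> 'k) set) (setsum im_phibar im_psibar) \<subseteq> Mbar p 2"
proof
  fix g :: "('k^4) set \<Rightarrow> 'k"
  assume "g \<in> setsum line_one (setsum im_phibar im_psibar)"
  then obtain c a b where g: "g = (\<lambda>x. c * one x + (phi a x + psi b x))"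
      and a: "a \<in> RL 1" and b: "b \<in> RL 3"
    unfolding line_one_def setsum_def im_phibar_def im_psibar_def by blast
  obtain c' where c': "(of_int c' :: 'k) = c" using Fsurj by blast
  let ?a = "\<lambda>x. liftk (a x)" and ?b = "\<lambda>x. liftk (b x)"
  let ?m = "\<lambda>x::('k^4) set. c' * oneZ x + (phi ?a x + psi ?b x)"
  have "?m \<in> M p 2"
    unfolding M_def
  proof (intro CollectI conjI allI)
    show "?m \<in> RL 2" by (simp add: RL_def oneZ_def phi_def psi_def)
    fix z
    show "int p ^ 2 dvd eta ?m z"
    proof (cases "z \<in> Lr 2")
      case False then show ?thesis by (simp add: eta_out)
    next
      case z: True
      have B: "{y\<in>Lr 2. y \<inter> z = {0}} \<subseteq> Lr 2" by auto
      have "eta ?m z = c' * eta oneZ z + (eta (phi ?a) z + eta (psi ?b) z)"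
        by (simp add: eta_add eta_cmult)
      moreover have "eta (phi ?a) z = (\<Sum>x\<in>Lr 1. ?a x * int (card {y\<in>{y\<in>Lr 2. y \<inter> z = {0}}. x \<inter> y = {0}}))"
        using z sum_phi[OF B, of ?a] by (simp add: eta_def)
      moreover have "eta (psi ?b) z = (\<Sum>x\<in>Lr 3. ?b x * int (card {y\<in>{y\<in>Lr 2. y \<inter> z = {0}}. x \<inter> y \<noteq> y}))"
        using z sum_psi[OF B, of ?b] by (simp add: eta_def)
      moreover have "int p ^ 2 dvd (\<Sum>x\<in>Lr 1. ?a x * int (card {y\<in>{y\<in>Lr 2. y \<inter> z = {0}}. x \<inter> y = {0}}))"
        by (intro dvd_sum dvd_mult D_phi z) auto
      moreover have "int p ^ 2 dvd (\<Sum>x\<in>Lr 3. ?b x * int (card {y\<in>{y\<in>Lr 2. y \<inter> z = {0}}. x \<inter> y \<noteq> y}))"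
        by (intro dvd_sum dvd_mult D_psi z) auto
      moreover have "int p ^ 2 dvd c' * eta oneZ z"
        using eta_oneZ[OF z] by (simp add: le_imp_power_dvd)
      ultimately show ?thesis by simp
    qed
  qed
  moreover have "redp ?m = g" unfolding g redp_def
    by (simp add: c' one_ofint hom_phi hom_psi lift)
  ultimately show "g \<in> Mbar p 2" unfolding Mbar_def using image_eqI[of g redp ?m "M p 2"] by simp
qed

lemma sum_filter_mult:
  fixes f :: "'a \<Rightarrow> int"
  assumes "finite A"
  shows "(\<Sum>x\<in>{x\<in>A. P x}. f x) = (\<Sum>x\<in>A. f x * (if P x then 1 else 0))"
proof -
  have "(\<Sum>x\<in>A. f x * (if P x then 1 else 0)) = (\<Sum>x\<in>A. if P x then f x else 0)"
    by (intro sum.cong) auto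
  then show ?thesis using sum.inter_filter[OF assms, of f P] by simp
qed

lemma part3b: "setsum (line_one :: (('k^4) set \<Rightarrow> 'k) set) im_etabar \<subseteq> Mbar p 3"
proof
  fix g :: "('k^4) set \<Rightarrow> 'k"
  assume "g \<in> setsum line_one im_etabar"
  then obtain c v where g: "g = (\<lambda>x. c * one x + eta v x)" and v: "v \<in> RL 2"
    unfolding line_one_def setsum_def im_etabar_def by blast
  obtain c' where c': "(of_int c' :: 'k) = c" using Fsurj by blast
  define K where "K = (int p - 1) * (int p ^ 2 - 1)"
  let ?v = "\<lambda>x. liftk (v x)"
  let ?m = "\<lambda>x::('k^4) set. c' * oneZ x + (eta ?v x - int p * K * ?v x)"
  have vRL: "?v \<in> RL 2" using liftRL v .
  have "?m \<in> M p 3"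
    unfolding M_def
  proof (intro CollectI conjI allI)
    show "?m \<in> RL 2" using vRL by (simp add: RL_def oneZ_def eta_def)
    fix z
    show "int p ^ 3 dvd eta ?m z"
    proof (cases "z \<in> Lr 2")
      case False then show ?thesis by (simp add: eta_out)
    next
      case z: True
      have B: "{y\<in>Lr 2. y \<inter> z = {0}} \<subseteq> Lr 2" by auto
      have em: "eta ?m z = c' * eta oneZ z + (eta (eta ?v) z - int p * K * eta ?v z)"
        by (simp add: eta_add eta_diff eta_cmult mult.assoc)
      have e1: "eta (eta ?v) z = (\<Sum>x\<in>Lr 2. ?v x * int (card {y\<in>{y\<in>Lr 2. y \<inter> z = {0}}. x \<inter> y = {0}}))"
        using z sum_eta[OF B, of ?v] by (simp add: eta_def)
      have e2: "int p * K * eta ?v z = (\<Sum>x\<in>Lr 2. ?v x * (int p * K * (if x \<inter> z = {0} then 1 else 0)))"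
      proof -
        have "eta ?v z = (\<Sum>x\<in>Lr 2. ?v x * (if x \<inter> z = {0} then 1 else 0))"
          using z sum_filter_mult[OF finL', of ?v 2 "\<lambda>x. x \<inter> z = {0}"] by (simp add: eta_def)
        then show ?thesis by (simp add: sum_distrib_left algebra_simps)
      qed
      have d1: "int p ^ 3 dvd (\<Sum>x\<in>Lr 2. ?v x * int (card {y\<in>{y\<in>Lr 2. y \<inter> z = {0}}. x \<inter> y = {0}}))
            - (\<Sum>x\<in>Lr 2. ?v x * (int p * K * (if x \<inter> z = {0} then 1 else 0)))"
      proof -
        have "(\<Sum>x\<in>Lr 2. ?v x * int (card {y\<in>{y\<in>Lr 2. y \<inter> z = {0}}. x \<inter> y = {0}}))
            - (\<Sum>x\<in>Lr 2. ?v x * (int p * K * (if x \<inter> z = {0} then 1 else 0)))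
            = (\<Sum>x\<in>Lr 2. ?v x * (int (card {y\<in>Lr 2. y \<inter> z = {0} \<and> x \<inter> y = {0}})
                   - int p * K * (if x \<inter> z = {0} then 1 else 0)))"
          by (simp add: sum_subtractf[symmetric] algebra_simps)
        moreover have "int p ^ 3 dvd \<dots>"
        proof (intro dvd_sum dvd_mult)
          fix x :: "('k^4) set" assume x: "x \<in> Lr 2"
          show "int p ^ 3 dvd int (card {y\<in>Lr 2. y \<inter> z = {0} \<and> x \<inter> y = {0}})
                   - int p * K * (if x \<inter> z = {0} then 1 else 0)"
            using H_mod[OF finK' x z] cp unfolding K_def by (simp add: mult.assoc)
        qed
        ultimately show ?thesis by simp
      qed
      have d2: "int p ^ 3 dvd c' * eta oneZ z"
        using eta_oneZ[OF z] by (simp add: le_imp_power_dvd)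
      have eq: "eta ?m z = c' * eta oneZ z + ((\<Sum>x\<in>Lr 2. ?v x * int (card {y\<in>{y\<in>Lr 2. y \<inter> z = {0}}. x \<inter> y = {0}}))
            - (\<Sum>x\<in>Lr 2. ?v x * (int p * K * (if x \<inter> z = {0} then 1 else 0))))"
        unfolding em e1 e2 ..
      show ?thesis unfolding eq by (rule dvd_add[OF d2 d1])
    qed
  qed
  moreover have "redp ?m = g" unfolding g redp_def
    using Fchar_int by (simp add: c' one_ofint hom_eta lift)
  ultimately show "g \<in> Mbar p 3" unfolding Mbar_def using image_eqI[of g redp ?m "M p 3"] by simp
qed

end

theorem lemma3:
  fixes p :: nat
  assumes "prime p" and "CARD('k::field) = p"
  shows "(ker_etabar :: (('k^4) set \<Rightarrow> 'k) set) \<subseteq> Mbar p 1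
    \<and> ((line_one :: (('k^4) set \<Rightarrow> 'k) set) \<inter> setsum im_phibar im_psibar = {\<lambda>x. 0}
       \<and> setsum (line_one :: (('k^4) set \<Rightarrow> 'k) set) (setsum im_phibar im_psibar) \<subseteq> Mbar p 2)
    \<and> ((line_one :: (('k^4) set \<Rightarrow> 'k) set) \<inter> im_etabar = {\<lambda>x. 0}
       \<and> setsum (line_one :: (('k^4) set \<Rightarrow> 'k) set) im_etabar \<subseteq> Mbar p 3)
    \<and> (line_one :: (('k^4) set \<Rightarrow> 'k) set) \<subseteq> Mbar p 4"
  using part1[OF assms] part2a[OF assms] part2b[OF assms] part3a[OF assms] part3b[OF assms] part4[OF assms]
  by blast

end
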